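(* Let $m_d>0$ and let $\gamma_d$ be generalized-$K$ distributed with parameters $k_d=m_d$ and mean $\overline\gamma_d>0$, i.e. with CDF $F_{\gamma_d}(x)=\frac{1}{\Gamma(m_d)^2}G_{1,3}^{2,1}\!\left(\frac{m_d^2x}{\overline\gamma_d}\,\middle|\,{1\atop m_d,m_d,0}\right)$. Then for every fixed $x>0$, as $\overline\gamma_d\to\infty$, $$F_{\gamma_d}(x)=\frac{\psi(m_d+1)+2\psi(1)-\psi(m_d)-\ln\!\left(\frac{m_d^2x}{\overline\gamma_d}\right)}{m_d^{-2m_d+1}\,\Gamma^2(m_d)\,x^{-m_d}\,\overline\gamma_d^{m_d}}+o(\overline\gamma_d^{-m_d}).$$
   Context: $\psi$ is the digamma function, $\Gamma$ the Gamma function, and $G^{m,n}_{p,q}$ the standard Meijer G-function. The generalized-$K$ distribution with parameters $k,m$ and mean $\overline\gamma$ is that of $\overline\gamma XY$ with $X,Y$ independent unit-mean Gamma variables of shapes $k$ and $m$. *)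

theory Defs
  imports "HOL-Probability.Probability" "HOL-Library.Landau_Symbols"
begin

definition gamma_unit_density :: "real \<Rightarrow> real \<Rightarrow> real" where
  "gamma_unit_density m t =
     (if t > 0 then m powr m * t powr (m - 1) * exp (- m * t) / Gamma m else 0)"

definition gamma_pair_measure :: "real \<Rightarrow> real \<Rightarrow> (real \<times> real) measure" where
  "gamma_pair_measure k m =
     density (lborel \<Otimes>\<^sub>M lborel)
       (\<lambda>(s, t). ennreal (gamma_unit_density k s * gamma_unit_density m t))"

text \<open>CDF of the generalized-K distribution with parameters k, m and mean gbar,
  i.e. of gbar * X * Y.\<close>
definition genK_cdf :: "real \<Rightarrow> real \<Rightarrow> real \<Rightarrow> real \<Rightarrow> real" where
  "genK_cdf k m gbar x =
     measure (gamma_pair_measure k m) {(s, t). gbar * s * t \<le> x}"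

end

theory Submission
  imports Defs "HOL-Real_Asymp.Real_Asymp"
begin


lemma Gamma_minus_inv_lim:
  "((\<lambda>h::real. Gamma h - 1/h) \<longlongrightarrow> Digamma 1) (at_right 0)"
proof -
  have d: "(Gamma has_field_derivative Gamma 1 * Digamma 1) (at (1::real))"
    by (rule has_field_derivative_Gamma) (auto simp: nonpos_Ints_def)
  hence "((\<lambda>h. (Gamma (1 + h) - Gamma 1) / h) \<longlongrightarrow> Gamma 1 * Digamma (1::real)) (at 0)"
    by (simp add: DERIV_def)
  hence "((\<lambda>h. (Gamma (1 + h) - Gamma 1) / h) \<longlongrightarrow> Digamma (1::real)) (at_right 0)"
    by (auto intro: tendsto_mono at_le)
  moreover have "eventually (\<lambda>h. (Gamma (1 + h) - Gamma 1) / h = Gamma h - 1/(h::real)) (at_right 0)"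
  proof (rule eventually_at_rightI[of 0 1])
    fix h :: real assume "h \<in> {0<..<1}"
    hence "0 < h" by simp
    have "h \<notin> \<int>\<^sub>\<le>\<^sub>0" using \<open>0<h\<close> by (auto elim!: nonpos_Ints_cases)
    hence "Gamma (1 + h) = h * Gamma h" using Gamma_plus1[of h] by (simp add: add.commute)
    thus "(Gamma (1 + h) - Gamma 1) / h = Gamma h - 1/h" using \<open>0<h\<close> by (simp add: field_simps)
  qed simp
  ultimately show ?thesis by (rule Lim_transform_eventually)
qed

definition phi :: "real \<Rightarrow> real" where
  "phi u = (exp (-u) - (if u \<le> 1 then 1 else 0)) / u"

lemma expm_int: "((\<lambda>u::real. exp (1 - u)) has_integral exp 1) {0..}"
proof -
  have "((\<lambda>u::real. exp (1::real) * exp (-1*u)) has_integral exp 1 * (exp (-1*0)/1)) {0..}"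
    by (intro has_integral_mult_right has_integral_exp_minus_to_infinity) auto
  thus ?thesis by (simp add: exp_diff exp_minus field_simps)
qed

lemma phi_bound:
  assumes "u \<ge> 0" "0 < h" "h \<le> 1"
  shows "\<bar>u powr h * phi u\<bar> \<le> exp (1 - u)"
proof (cases "u = 0")
  case True thus ?thesis by (simp add: phi_def)
next
  case False
  hence u: "u > 0" using assms by simp
  show ?thesis
  proof (cases "u \<le> 1")
    case True
    have "1 - u \<le> exp (-u)" using exp_ge_add_one_self[of "-u"] by simp
    moreover have "exp (-u) \<le> 1" using u by simp
    ultimately have p: "\<bar>phi u\<bar> \<le> 1" using u True by (simp add: phi_def divide_le_eq abs_le_iff)
    have q: "u powr h \<le> 1 powr h" using u True assms by (intro powr_mono2) auto
    have "\<bar>u powr h * phi u\<bar> = u powr h * \<bar>phi u\<bar>" by (simp add: abs_mult)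
    also have "\<dots> \<le> 1 * 1" using p q by (intro mult_mono) auto
    also have "\<dots> \<le> exp (1 - u)" using True by simp
    finally show ?thesis .
  next
    case False
    have q: "u powr h \<le> u powr 1" using False assms by (intro powr_mono) auto
    have "\<bar>u powr h * phi u\<bar> = u powr h * (exp (-u) / u)" using False by (simp add: phi_def abs_mult)
    also have "\<dots> \<le> u * (exp (-u) / u)" using q False by (intro mult_right_mono) auto
    also have "\<dots> = exp (-u)" using False by simp
    also have "\<dots> \<le> exp (1 - u)" by simp
    finally show ?thesis .
  qed
qed

lemma phi_powr_integral:
  assumes "0 < h" "h \<le> 1"
  shows "((\<lambda>u. u powr h * phi u) has_integral (Gamma h - 1/h)) {0..}"
proof -
  have G: "((\<lambda>t. t powr (h - 1) / exp t) has_integral Gamma h) {0..}"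
    using Gamma_integral_real assms by simp
  have P0: "((\<lambda>t. t powr (h - 1)) has_integral (1 powr (h - 1 + 1) / (h - 1 + 1))) {0..1}"
    using assms by (intro has_integral_powr_from_0) auto
  hence P: "((\<lambda>t. if t \<in> {0..1} then t powr (h - 1) else 0) has_integral 1/h) {0..}"
    by (subst has_integral_restrict) auto
  have "((\<lambda>t. t powr (h - 1) / exp t - (if t \<in> {0..1} then t powr (h - 1) else 0)) has_integral (Gamma h - 1/h)) {0..}"
    by (intro has_integral_diff G P)
  thus ?thesis
  proof (rule has_integral_spike_finite[of "{0}", rotated 2], simp)
    fix u :: real assume "u \<in> {0..} - {0}"
    hence u: "u > 0" by simp
    have e: "u powr (h - 1) = u powr h / u" using u by (simp add: powr_diff)
    show "u powr h * phi u = u powr (h - 1) / exp u - (if u \<in> {0..1} then u powr (h - 1) else 0)"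
      using u unfolding e phi_def by (auto simp: field_simps exp_minus)
  qed
qed

lemma phi_has_integral: "(phi has_integral Digamma 1) {0..}"
proof -
  define hk where "hk = (\<lambda>k::nat. inverse (real (Suc k)))"
  have hk: "0 < hk k" "hk k \<le> 1" for k by (auto simp: hk_def field_simps)
  have hk0: "hk \<longlonglongrightarrow> 0" unfolding hk_def by (rule LIMSEQ_inverse_real_of_nat)
  have hkr: "filterlim hk (at_right 0) sequentially"
    by (rule tendsto_imp_filterlim_at_right[OF hk0]) (auto simp: hk)
  have y: "(\<lambda>k. Gamma (hk k) - 1 / hk k) \<longlonglongrightarrow> Digamma 1"
    by (rule filterlim_compose[OF Gamma_minus_inv_lim hkr])
  show ?thesis
  proof (rule has_integral_dominated_convergence[OF _ _ _ _ y])
    show "((\<lambda>u. u powr hk k * phi u) has_integral Gamma (hk k) - 1 / hk k) {0..}" for k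
      using hk by (intro phi_powr_integral)
    show "(\<lambda>u::real. exp (1 - u)) integrable_on {0..}" using expm_int by (rule has_integral_integrable)
    show "\<forall>u\<in>{0..}. norm (u powr hk k * phi u) \<le> exp (1 - u)" for k
      using phi_bound hk by auto
    show "\<forall>u\<in>{0..}. (\<lambda>k. u powr hk k * phi u) \<longlonglongrightarrow> phi u"
    proof
      fix u :: real assume "u \<in> {0..}"
      show "(\<lambda>k. u powr hk k * phi u) \<longlonglongrightarrow> phi u"
      proof (cases "u = 0")
        case True thus ?thesis by (simp add: phi_def)
      next
        case False
        have "(\<lambda>k. u powr hk k) \<longlonglongrightarrow> u powr 0"
          using False by (intro tendsto_powr tendsto_const hk0) auto
        hence "(\<lambda>k. u powr hk k * phi u) \<longlonglongrightarrow> u powr 0 * phi u"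
          by (intro tendsto_mult tendsto_const)
        thus ?thesis using False \<open>u \<in> {0..}\<close> by simp
      qed
    qed
  qed
qed



lemma has_integral_0_open:
  fixes f :: "real \<Rightarrow> real"
  assumes "(f has_integral I) {0::real..}"
  shows "(f has_integral I) {0<..}"
proof -
  have "((\<lambda>x. if x \<in> {0<..} then f x else 0) has_integral I) {0..}"
    by (rule has_integral_spike_finite[of "{0}", rotated 2, OF assms]) auto
  moreover have sub: "{0<..} \<subseteq> {0::real..}" by auto
  ultimately show ?thesis by (simp only: has_integral_restrict[OF sub])
qed

lemma phi_le1: assumes "0 \<le> u" "u \<le> 1" shows "\<bar>phi u\<bar> \<le> 1"
proof (cases "u = 0")
  case True thus ?thesis by (simp add: phi_def)
next
  case False
  hence u: "u > 0" using assms by simp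
  have "1 - u \<le> exp (-u)" using exp_ge_add_one_self[of "-u"] by simp
  moreover have "exp (-u) \<le> 1" using u by simp
  ultimately show ?thesis using u assms by (simp add: phi_def divide_le_eq abs_le_iff)
qed

lemma phi_bound0: assumes "0 \<le> u" shows "\<bar>phi u\<bar> \<le> exp (1 - u)"
proof (cases "u \<le> 1")
  case True
  hence "\<bar>phi u\<bar> \<le> 1" using phi_le1 assms by auto
  also have "1 \<le> exp (1 - u)" using True by simp
  finally show ?thesis .
next
  case False
  hence "\<bar>phi u\<bar> = exp (-u) / u" by (simp add: phi_def)
  also have "\<dots> \<le> exp (-u)" using False by (simp add: divide_le_eq)
  also have "\<dots> \<le> exp (1 - u)" by simp
  finally show ?thesis .
qed

lemma lebesgue_Ioi[simp]: "{0::real<..} \<in> sets lebesgue"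
  by (rule sets_completionI_sets) simp

lemma phi_abs_int: "phi absolutely_integrable_on {0<..}"
proof (rule absolutely_integrable_integrable_bound)
  show "phi integrable_on {0<..}" using has_integral_0_open[OF phi_has_integral] by blast
  show "(\<lambda>u::real. exp (1 - u)) integrable_on {0<..}" using has_integral_0_open[OF expm_int] by blast
  show "norm (phi u) \<le> exp (1 - u)" if "u \<in> {0<..}" for u
    using phi_bound0[of u] that by simp
qed

definition T1 :: "real \<Rightarrow> real" where
  "T1 w = integral {0<..} (\<lambda>u. exp (- w / u) * phi u)"

lemma T1_int: assumes "w \<ge> 0" shows "(\<lambda>u. exp (- w / u) * phi u) absolutely_integrable_on {0<..}"
proof (rule absolutely_integrable_bounded_measurable_product_real[OF _ _ _ phi_abs_int])
  show "(\<lambda>u. exp (- w / u)) \<in> borel_measurable (lebesgue_on {0<..})"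
    by (intro continuous_imp_measurable_on_sets_lebesgue continuous_intros) auto
  show "{0::real<..} \<in> sets lebesgue" by simp
  show "bounded ((\<lambda>u. exp (- w / u)) ` {0<..})"
    unfolding bounded_iff
  proof (intro exI ballI)
    fix y assume "y \<in> (\<lambda>u. exp (- w / u)) ` {0<..}"
    then obtain u where "y = exp (- w / u)" "u > 0" by auto
    thus "norm y \<le> 1" using assms by simp
  qed
qed

lemma phi_int_open: "(phi has_integral Digamma 1) {0<..}"
  by (rule has_integral_0_open[OF phi_has_integral])

lemma T1_lim: "(T1 \<longlongrightarrow> Digamma 1) (at_right 0)"
proof (rule tendsto_at_right_sequentially[of 0 1])
  fix S :: "nat \<Rightarrow> real" assume S: "\<And>n. 0 < S n" "S \<longlonglongrightarrow> 0"
  have "(\<lambda>k. integral {0<..} (\<lambda>u. exp (- S k / u) * phi u)) \<longlonglongrightarrow> integral {0<..} phi"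
  proof (rule dominated_convergence(2))
    show "(\<lambda>u. exp (- S k / u) * phi u) integrable_on {0<..}" for k
      using T1_int[of "S k"] S(1)[of k] by (simp add: set_lebesgue_integral_eq_integral(1))
    show "(\<lambda>u::real. exp (1 - u)) integrable_on {0<..}" using has_integral_0_open[OF expm_int] by blast
    show "norm (exp (- S k / u) * phi u) \<le> exp (1 - u)" if "u \<in> {0<..}" for k u
    proof -
      have "norm (exp (- S k / u) * phi u) = exp (- S k / u) * \<bar>phi u\<bar>" by (simp add: abs_mult)
      also have "\<dots> \<le> 1 * exp (1 - u)"
        using that S(1)[of k] phi_bound0[of u] by (intro mult_mono) auto
      finally show ?thesis by simp
    qed
    show "(\<lambda>k. exp (- S k / u) * phi u) \<longlonglongrightarrow> phi u" if "u \<in> {0<..}" for u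
    proof -
      have "(\<lambda>k. exp (- S k / u) * phi u) \<longlonglongrightarrow> exp (- 0 / u) * phi u"
        using that by (intro tendsto_intros S(2)) auto
      thus ?thesis by simp
    qed
  qed
  moreover have "integral {0<..} phi = Digamma 1" using phi_int_open by (rule integral_unique)
  ultimately show "(\<lambda>n. T1 (S n)) \<longlonglongrightarrow> Digamma 1" by (simp add: T1_def)
qed simp

lemma lebesgue_Ici[simp]: "{a::real..} \<in> sets lebesgue"
  by (rule sets_completionI_sets) simp

lemma lebesgue_Icc[simp]: "{a::real..b} \<in> sets lebesgue"
  by (rule sets_completionI_sets) simp

lemma phi_abs_int0: "phi absolutely_integrable_on {0..}"
proof (rule absolutely_integrable_integrable_bound)
  show "phi integrable_on {0..}" using phi_has_integral by blast
  show "(\<lambda>u::real. exp (1 - u)) integrable_on {0..}" using expm_int by blast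
  show "norm (phi u) \<le> exp (1 - u)" if "u \<in> {0..}" for u
    using phi_bound0[of u] that by simp
qed

lemma E_abs_int:
  fixes w :: real
  assumes w: "w > 0"
  shows "(\<lambda>s. exp (-s) / s) absolutely_integrable_on {w..}"
proof (rule measurable_bounded_by_integrable_imp_absolutely_integrable)
  show "(\<lambda>s. exp (-s) / s) \<in> borel_measurable (lebesgue_on {w..})"
    using w by (intro continuous_imp_measurable_on_sets_lebesgue continuous_on_divide continuous_intros lebesgue_Ici) auto
  show "{w..} \<in> sets lebesgue" by simp
  have "((\<lambda>x::real. exp (-1*x) * (1/w)) has_integral (exp (-1*w)/1) * (1/w)) {w..}"
    by (intro has_integral_mult_left has_integral_exp_minus_to_infinity) auto
  thus "(\<lambda>s. exp (-s) / w) integrable_on {w..}" by (auto simp: integrable_on_def)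
  show "norm (exp (-s) / s) \<le> exp (-s) / w" if "s \<in> {w..}" for s
    using that w by (auto intro!: divide_left_mono)
qed

lemma subst_part:
  fixes w :: real
  assumes w: "w > 0"
  shows "((\<lambda>u. exp (- w / u) / u) has_integral integral {w..} (\<lambda>s. exp (-s) / s)) {0<..1}"
proof -
  define b where "b = integral {w..} (\<lambda>s. exp (-s) / s)"
  have img: "(\<lambda>s. w / s) ` {w..} = {0<..1}"
  proof
    show "(\<lambda>s. w / s) ` {w..} \<subseteq> {0<..1}" using w by (auto simp: divide_le_eq)
    show "{0<..1} \<subseteq> (\<lambda>s. w / s) ` {w..}"
    proof
      fix u :: real assume u: "u \<in> {0<..1}"
      have "w / (w / u) = u" using u w by simp
      moreover have "w / u \<in> {w..}" using u w by (auto simp: field_simps)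
      ultimately show "u \<in> (\<lambda>s. w / s) ` {w..}" by (metis image_eqI)
    qed
  qed
  have cv: "(\<lambda>s. \<bar>- w / s\<^sup>2\<bar> * (exp (- w / (w / s)) / (w / s))) absolutely_integrable_on {w..} \<and>
           integral {w..} (\<lambda>s. \<bar>- w / s\<^sup>2\<bar> * (exp (- w / (w / s)) / (w / s))) = b
     \<longleftrightarrow> (\<lambda>u. exp (- w / u) / u) absolutely_integrable_on ((\<lambda>s. w / s) ` {w..}) \<and>
           integral ((\<lambda>s. w / s) ` {w..}) (\<lambda>u. exp (- w / u) / u) = b"
  proof (rule has_absolute_integral_change_of_variables_1')
    show "{w..} \<in> sets lebesgue" by simp
    show "((\<lambda>s. w / s) has_field_derivative - w / s\<^sup>2) (at s within {w..})" if "s \<in> {w..}" for s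
      using that w by (auto intro!: derivative_eq_intros simp: power2_eq_square)
    show "inj_on (\<lambda>s. w / s) {w..}" using w by (auto simp: inj_on_def field_simps)
  qed
  have eq: "\<bar>- w / s\<^sup>2\<bar> * (exp (- w / (w / s)) / (w / s)) = exp (-s) / s" if "s \<in> {w..}" for s
    using that w by (auto simp: power2_eq_square field_simps)
  have "(\<lambda>s. \<bar>- w / s\<^sup>2\<bar> * (exp (- w / (w / s)) / (w / s))) absolutely_integrable_on {w..}"
    using E_abs_int[OF w] by (subst set_integrable_cong[OF refl refl eq]) auto
  moreover have "integral {w..} (\<lambda>s. \<bar>- w / s\<^sup>2\<bar> * (exp (- w / (w / s)) / (w / s))) = b"
    unfolding b_def by (rule integral_cong) (rule eq)
  ultimately have r: "(\<lambda>u. exp (- w / u) / u) absolutely_integrable_on {0<..1} \<and>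
           integral {0<..1} (\<lambda>u. exp (- w / u) / u) = b" using cv img by simp
  hence "(\<lambda>u. exp (- w / u) / u) integrable_on {0<..1}"
    using set_lebesgue_integral_eq_integral(1) by blast
  thus ?thesis using r unfolding b_def by (metis has_integral_integrable_integral)
qed

definition R :: "real \<Rightarrow> real" where "R w = integral {0..w} phi"

lemma phi_int_sub: assumes "S \<in> sets lebesgue" "S \<subseteq> {0..}" shows "phi integrable_on S"
  using set_integrable_subset[OF phi_abs_int0 assms] set_lebesgue_integral_eq_integral(1) by blast

lemma R_bound: assumes "0 \<le> w" "w \<le> 1" shows "\<bar>R w\<bar> \<le> w"
proof -
  have "(phi has_integral R w) (cbox 0 w)"
    unfolding R_def cbox_interval using phi_int_sub[of "{0..w}"] by (auto intro: integrable_integral)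
  hence "norm (R w) \<le> 1 * measure lborel (cbox 0 w)"
    by (rule has_integral_bound[OF zero_le_one]) (use phi_le1 assms in \<open>auto simp: cbox_interval\<close>)
  thus ?thesis using assms by (simp add: cbox_interval)
qed

lemma E_split:
  assumes w: "0 < w" "w \<le> 1"
  shows "((\<lambda>s. exp (-s) / s) has_integral (Digamma 1 - R w - ln w)) {w..}"
proof -
  have p1: "(phi has_integral integral {w..} phi) {w..}"
    using phi_int_sub[of "{w..}"] w by (auto intro: integrable_integral)
  have p2: "(phi has_integral R w) {0..w}"
    unfolding R_def using phi_int_sub[of "{0..w}"] by (auto intro: integrable_integral)
  have "(phi has_integral (R w + integral {w..} phi)) ({0..w} \<union> {w..})"
  proof (rule has_integral_Un[OF p2 p1])
    have "{0..w} \<inter> {w..} = {w}" using w by auto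
    thus "negligible ({0..w} \<inter> {w..})" by simp
  qed
  moreover have "{0..w} \<union> {w..} = {0::real..}" using w by auto
  ultimately have "(phi has_integral (R w + integral {w..} phi)) {0..}" by simp
  from has_integral_unique[OF this phi_has_integral]
  have i1: "integral {w..} phi = Digamma 1 - R w" by simp
  have l: "((\<lambda>s. 1 / s) has_integral (ln 1 - ln w)) {w..1}"
  proof (rule fundamental_theorem_of_calculus)
    show "w \<le> 1" using w by simp
    show "(ln has_vector_derivative 1 / x) (at x within {w..1})" if "x \<in> {w..1}" for x
      using that w by (auto intro!: derivative_eq_intros simp: has_real_derivative_iff_has_vector_derivative[symmetric])
  qed
  have sub: "{w..1} \<subseteq> {w..}" by auto
  have l2: "((\<lambda>s. if s \<in> {w..1} then 1 / s else 0) has_integral (- ln w)) {w..}"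
    using l by (simp only: has_integral_restrict[OF sub]) simp
  have "((\<lambda>s. phi s + (if s \<in> {w..1} then 1 / s else 0)) has_integral (Digamma 1 - R w - ln w)) {w..}"
    using has_integral_add[OF p1 l2] i1 by simp
  thus ?thesis
  proof (rule has_integral_spike_finite[of "{}", rotated 2], simp)
    fix s assume "s \<in> {w..} - {}"
    hence s: "s \<ge> w" "s > 0" using w by auto
    show "exp (- s) / s = phi s + (if s \<in> {w..1} then 1 / s else 0)"
    proof (cases "s \<le> 1")
      case True thus ?thesis using s by (simp add: phi_def diff_divide_distrib)
    next
      case False thus ?thesis using s by (simp add: phi_def)
    qed
  qed
qed

lemma K_has_int:
  assumes w: "0 < w" "w \<le> 1"
  shows "((\<lambda>u. exp (- u - w / u) / u) has_integral (T1 w + Digamma 1 - R w - ln w)) {0<..}"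
proof -
  have a: "((\<lambda>u. exp (- w / u) * phi u) has_integral T1 w) {0<..}"
    unfolding T1_def using T1_int[of w] w set_lebesgue_integral_eq_integral(1)
    by (auto intro: integrable_integral)
  have e: "integral {w..} (\<lambda>s. exp (-s) / s) = Digamma 1 - R w - ln w"
    using E_split[OF w] by (rule integral_unique)
  have sub: "{0<..1} \<subseteq> {0::real<..}" by auto
  have b: "((\<lambda>u. if u \<in> {0<..1} then exp (- w / u) / u else 0) has_integral (Digamma 1 - R w - ln w)) {0<..}"
    using subst_part[of w] w e by (simp only: has_integral_restrict[OF sub])
  have "((\<lambda>u. exp (- w / u) * phi u + (if u \<in> {0<..1} then exp (- w / u) / u else 0)) has_integral (T1 w + Digamma 1 - R w - ln w)) {0<..}"
    using has_integral_add[OF a b] by (simp add: algebra_simps)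
  thus ?thesis
  proof (rule has_integral_spike_finite[of "{}", rotated 2], simp)
    fix u :: real assume "u \<in> {0<..} - {}"
    hence u: "u > 0" by simp
    have ee: "exp (- u - w / u) = exp (-u) * exp (- w / u)" by (simp add: exp_diff[symmetric] exp_add[symmetric])
    show "exp (- u - w / u) / u = exp (- w / u) * phi u + (if u \<in> {0<..1} then exp (- w / u) / u else 0)"
    proof (cases "u \<le> 1")
      case True thus ?thesis using u unfolding ee by (simp add: phi_def diff_divide_distrib algebra_simps)
    next
      case False thus ?thesis using u unfolding ee by (simp add: phi_def)
    qed
  qed
qed

lemma K_lim: "((\<lambda>w. T1 w + Digamma 1 - R w) \<longlongrightarrow> 2 * Digamma 1) (at_right 0)"
proof -
  have "(R \<longlongrightarrow> 0) (at_right 0)"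
  proof (rule tendsto_sandwich[of "\<lambda>w. - w" _ _ "\<lambda>w. w"])
    show "eventually (\<lambda>w. - w \<le> R w) (at_right 0)" "eventually (\<lambda>w. R w \<le> w) (at_right 0)"
      using eventually_at_rightI[of 0 1 "\<lambda>w. \<bar>R w\<bar> \<le> w"] R_bound
      by (auto elim!: eventually_mono)
    show "((\<lambda>w::real. - w) \<longlongrightarrow> 0) (at_right 0)" "((\<lambda>w::real. w) \<longlongrightarrow> 0) (at_right 0)"
      by (auto intro!: tendsto_eq_intros simp: tendsto_ident_at)
  qed
  hence "((\<lambda>w. T1 w + Digamma 1 - R w) \<longlongrightarrow> Digamma 1 + Digamma 1 - 0) (at_right 0)"
    by (intro tendsto_intros T1_lim)
  thus ?thesis by simp
qed



lemma gud_measurable[measurable]: "gamma_unit_density m \<in> borel_measurable borel"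
  unfolding gamma_unit_density_def by measurable

definition pg :: "real \<Rightarrow> real \<Rightarrow> real" where
  "pg m y = (if y > 0 then y powr (m - 1) * exp (- y) / Gamma m else 0)"

lemma pg_measurable[measurable]: "pg m \<in> borel_measurable borel"
  unfolding pg_def by measurable

lemma gud_nonneg: "m > 0 \<Longrightarrow> gamma_unit_density m y \<ge> 0"
  unfolding gamma_unit_density_def by auto

lemma pg_nonneg: "m > 0 \<Longrightarrow> pg m y \<ge> 0"
  unfolding pg_def by auto

lemma gud_scale:
  assumes m: "m > 0"
  shows "gamma_unit_density m (y / m) = m * pg m y"
proof (cases "y > 0")
  case True
  have "(y / m) powr (m - 1) = y powr (m - 1) / m powr (m - 1)"
    using True m by (simp add: powr_divide)
  moreover have "m powr m = m * m powr (m - 1)"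
    using m by (simp add: powr_diff)
  ultimately show ?thesis using True m
    by (simp add: gamma_unit_density_def pg_def field_simps)
next
  case False
  hence "\<not> (y / m > 0)" using m by (simp add: zero_less_divide_iff)
  thus ?thesis using False by (simp add: gamma_unit_density_def pg_def)
qed

lemma pg_prod:
  assumes m: "m > 0" and u: "u > 0" and w: "w > 0"
  shows "pg m u * pg m (w / u) / u = w powr (m - 1) / (Gamma m)\<^sup>2 * (exp (- u - w / u) / u)"
proof -
  have "(w / u) powr (m - 1) = w powr (m - 1) / u powr (m - 1)"
    using u w by (simp add: powr_divide)
  moreover have "exp (- u - w / u) = exp (-u) * exp (- (w / u))"
    by (simp add: exp_diff exp_minus field_simps)
  ultimately show ?thesis using u w
    by (simp add: pg_def power2_eq_square field_simps)
qed

lemma ennreal_mult3: "0 \<le> a \<Longrightarrow> 0 \<le> b \<Longrightarrow> 0 \<le> c \<Longrightarrow> ennreal a * (ennreal b * ennreal c) = ennreal (a * (b * c))"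
  by (simp add: ennreal_mult)

lemma genK_repr:
  assumes m: "m > 0" and g: "g > 0" and x: "x > 0"
  shows "genK_cdf m m g x = enn2real (\<integral>\<^sup>+ w. ennreal (indicator {0<..m\<^sup>2 * x / g} w * (w powr (m - 1) / (Gamma m)\<^sup>2))
            * (\<integral>\<^sup>+ u. ennreal (indicator {0<..} u * (exp (- u - w / u) / u)) \<partial>lborel) \<partial>lborel)"
proof -
  define z where "z = m\<^sup>2 * x / g"
  define d where "d = gamma_unit_density m"
  define A where "A = {(s, t). g * s * t \<le> x}"
  have dm[measurable]: "d \<in> borel_measurable borel" unfolding d_def by measurable
  have "A = {p \<in> space (lborel \<Otimes>\<^sub>M lborel). g * fst p * snd p \<le> x}"
    by (auto simp: A_def space_pair_measure)
  also have "\<dots> \<in> sets (lborel \<Otimes>\<^sub>M lborel)" by measurable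
  finally have Am[measurable]: "A \<in> sets (lborel \<Otimes>\<^sub>M lborel)" .
  define I where "I = (\<lambda>s. \<integral>\<^sup>+ t. ennreal (d s * d t) * indicator A (s, t) \<partial>lborel)"
  have Im[measurable]: "I \<in> borel_measurable borel" unfolding I_def by measurable
  have 1: "genK_cdf m m g x = enn2real (\<integral>\<^sup>+ s. I s \<partial>lborel)"
    unfolding genK_cdf_def gamma_pair_measure_def measure_def I_def
    apply (subst emeasure_density)
      apply measurable[1]
     apply (fold A_def d_def, rule Am)
    apply (subst lborel.nn_integral_fst[symmetric])
     apply measurable
    done
  have 2: "(\<integral>\<^sup>+ s. I s \<partial>lborel) = ennreal (1/m) * (\<integral>\<^sup>+ u. I (u / m) \<partial>lborel)"
    using nn_integral_real_affine[OF Im, of "1/m" 0] m by simp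
  define Q where "Q = (\<lambda>u w. if u > 0 then pg m u * pg m (w / u) / u * indicator {..z} w else 0)"
  have Qm[measurable]: "(\<lambda>(u, w). ennreal (Q u w)) \<in> borel_measurable (lborel \<Otimes>\<^sub>M lborel)"
    unfolding Q_def by measurable
  have 3: "ennreal (1/m) * I (u / m) = (\<integral>\<^sup>+ w. ennreal (Q u w) \<partial>lborel)" for u
  proof (cases "u > 0")
    case False
    hence "d (u / m) = 0" unfolding d_def using gud_scale[OF m, of u] by (simp add: pg_def)
    thus ?thesis using False by (simp add: I_def Q_def)
  next
    case True
    define f where "f = (\<lambda>t. ennreal (d (u / m) * d t) * indicator A (u / m, t))"
    have fm[measurable]: "f \<in> borel_measurable borel" unfolding f_def
      by measurable
    have "I (u / m) = ennreal (1 / (m * u)) * (\<integral>\<^sup>+ w. f (0 + 1 / (m * u) * w) \<partial>lborel)"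
      unfolding I_def f_def[symmetric] using nn_integral_real_affine[OF fm, of "1 / (m * u)" 0] m True
      by simp
    also have "\<dots> = (\<integral>\<^sup>+ w. ennreal (1 / (m * u)) * f (0 + 1 / (m * u) * w) \<partial>lborel)"
      by (rule nn_integral_cmult[symmetric]) measurable
    finally have "ennreal (1/m) * I (u / m) = ennreal (1/m) * (\<integral>\<^sup>+ w. ennreal (1 / (m * u)) * f (0 + 1 / (m * u) * w) \<partial>lborel)"
      by simp
    also have "\<dots> = (\<integral>\<^sup>+ w. ennreal (1/m) * (ennreal (1 / (m * u)) * f (0 + 1 / (m * u) * w)) \<partial>lborel)"
      by (rule nn_integral_cmult[symmetric]) measurable
    also have "\<dots> = (\<integral>\<^sup>+ w. ennreal (Q u w) \<partial>lborel)"
    proof (rule nn_integral_cong)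
      fix w :: real
      have ind: "indicator A (u / m, 1 / (m * u) * w) = (indicator {..z} w :: ennreal)"
      proof -
        have "g * (u / m) * (1 / (m * u) * w) = g * w / m\<^sup>2" using True m by (simp add: power2_eq_square field_simps)
        moreover have "g * w / m\<^sup>2 \<le> x \<longleftrightarrow> w \<le> z" using g m by (simp add: z_def field_simps)
        ultimately have "(u / m, 1 / (m * u) * w) \<in> A \<longleftrightarrow> w \<le> z" unfolding A_def by (simp only: mem_Collect_eq case_prod_conv)
        thus ?thesis by (simp add: indicator_def)
      qed
      have dd: "d (u / m) = m * pg m u" "d (1 / (m * u) * w) = m * pg m (w / u)" "d (w / (m * u)) = m * pg m (w / u)"
        unfolding d_def using gud_scale[OF m, of u] gud_scale[OF m, of "w / u"] by (simp_all add: field_simps)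
      have nn: "0 \<le> pg m u" "0 \<le> pg m (w / u)" using pg_nonneg[OF m] by auto
      have "ennreal (1/m) * (ennreal (1 / (m * u)) * ennreal (m * pg m u * (m * pg m (w / u))))
            = ennreal (1/m * (1 / (m * u) * (m * pg m u * (m * pg m (w / u)))))"
        using m True nn by (intro ennreal_mult3) auto
      also have "1/m * (1 / (m * u) * (m * pg m u * (m * pg m (w / u)))) = pg m u * pg m (w / u) / u"
        using m True by (simp add: field_simps)
      finally show "ennreal (1/m) * (ennreal (1 / (m * u)) * f (0 + 1 / (m * u) * w)) = ennreal (Q u w)"
        unfolding f_def Q_def using True ind by (auto simp: indicator_def dd)
    qed
    finally show ?thesis .
  qed
  have 4: "(\<integral>\<^sup>+ u. (\<integral>\<^sup>+ w. ennreal (Q u w) \<partial>lborel) \<partial>lborel) = (\<integral>\<^sup>+ w. (\<integral>\<^sup>+ u. ennreal (Q u w) \<partial>lborel) \<partial>lborel)"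
    by (rule lborel_pair.Fubini'[symmetric]) (rule Qm)
  have 5: "(\<integral>\<^sup>+ u. ennreal (Q u w) \<partial>lborel) = ennreal (indicator {0<..z} w * (w powr (m - 1) / (Gamma m)\<^sup>2))
            * (\<integral>\<^sup>+ u. ennreal (indicator {0<..} u * (exp (- u - w / u) / u)) \<partial>lborel)" for w
  proof -
    have "(\<integral>\<^sup>+ u. ennreal (Q u w) \<partial>lborel) = (\<integral>\<^sup>+ u. ennreal (indicator {0<..z} w * (w powr (m - 1) / (Gamma m)\<^sup>2))
            * ennreal (indicator {0<..} u * (exp (- u - w / u) / u)) \<partial>lborel)"
    proof (rule nn_integral_cong)
      fix u :: real
      show "ennreal (Q u w) = ennreal (indicator {0<..z} w * (w powr (m - 1) / (Gamma m)\<^sup>2))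
            * ennreal (indicator {0<..} u * (exp (- u - w / u) / u))"
      proof (cases "u > 0 \<and> w > 0")
        case True
        thus ?thesis using pg_prod[OF m, of u w] m
          by (auto simp: Q_def indicator_def ennreal_mult[symmetric])
      next
        case False
        moreover have "w \<le> 0 \<Longrightarrow> u > 0 \<Longrightarrow> pg m (w / u) = 0"
        proof -
          assume "w \<le> 0" "u > 0"
          hence "\<not> (w / u > 0)" by (simp add: zero_less_divide_iff)
          thus ?thesis by (simp add: pg_def)
        qed
        ultimately show ?thesis by (auto simp: Q_def indicator_def)
      qed
    qed
    also have "\<dots> = ennreal (indicator {0<..z} w * (w powr (m - 1) / (Gamma m)\<^sup>2))
            * (\<integral>\<^sup>+ u. ennreal (indicator {0<..} u * (exp (- u - w / u) / u)) \<partial>lborel)"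
      by (rule nn_integral_cmult) measurable
    finally show ?thesis .
  qed
  have "(\<integral>\<^sup>+ s. I s \<partial>lborel) = (\<integral>\<^sup>+ u. ennreal (1/m) * I (u / m) \<partial>lborel)"
    unfolding 2 by (rule nn_integral_cmult[symmetric]) measurable
  also have "\<dots> = (\<integral>\<^sup>+ u. (\<integral>\<^sup>+ w. ennreal (Q u w) \<partial>lborel) \<partial>lborel)"
    using 3 by simp
  also have "\<dots> = (\<integral>\<^sup>+ w. ennreal (indicator {0<..z} w * (w powr (m - 1) / (Gamma m)\<^sup>2))
            * (\<integral>\<^sup>+ u. ennreal (indicator {0<..} u * (exp (- u - w / u) / u)) \<partial>lborel) \<partial>lborel)"
    unfolding 4 5 ..
  finally show ?thesis unfolding 1 z_def by simp
qed



lemma powr_ln_lim: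
  fixes m :: real assumes m: "m > 0"
  shows "((\<lambda>w. w powr m * ln w) \<longlongrightarrow> 0) (at_right 0)"
  using m by real_asymp

lemma powr_lim:
  fixes m :: real assumes m: "m > 0"
  shows "((\<lambda>w. w powr m) \<longlongrightarrow> 0) (at_right 0)"
  using m by real_asymp

definition FF :: "real \<Rightarrow> real \<Rightarrow> real \<Rightarrow> real" where
  "FF m D w = w powr m * (- ln w + D) / m + w powr m / m\<^sup>2"

lemma FF_0: "FF m D 0 = 0" by (simp add: FF_def)

lemma FF_cont:
  assumes m: "m > 0" and z: "z > 0"
  shows "continuous_on {0..z} (FF m D)"
proof -
  have "((\<lambda>w. w powr m * (- ln w + D) / m + w powr m / m\<^sup>2) \<longlongrightarrow> (- 0 + 0 * D) / m + 0 / m\<^sup>2) (at_right 0)"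
  proof -
    have e: "(\<lambda>w. w powr m * (- ln w + D) / m + w powr m / m\<^sup>2) = (\<lambda>w. (- (w powr m * ln w) + w powr m * D) / m + w powr m / m\<^sup>2)"
      by (auto simp: algebra_simps)
    show ?thesis unfolding e using m by (intro tendsto_intros powr_ln_lim powr_lim) auto
  qed
  hence l: "(FF m D \<longlongrightarrow> FF m D 0) (at_right 0)" by (simp add: FF_def[abs_def])
  show ?thesis
    unfolding continuous_on_def
  proof (intro ballI)
    fix w assume w: "w \<in> {0..z}"
    show "(FF m D \<longlongrightarrow> FF m D w) (at w within {0..z})"
    proof (cases "w = 0")
      case True thus ?thesis using l z by (simp add: at_within_Icc_at_right)
    next
      case False
      hence "w > 0" using w by simp
      hence "isCont (FF m D) w" unfolding FF_def using m by (intro continuous_intros) auto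
      thus ?thesis unfolding isCont_def by (rule tendsto_mono[OF at_le, rotated]) simp
    qed
  qed
qed

lemma FF_deriv:
  assumes m: "m > 0" and w: "w > 0"
  shows "(FF m D has_real_derivative w powr (m - 1) * (- ln w + D)) (at w)"
proof -
  have e: "w powr m / w = w powr (m - 1)" using w by (simp add: powr_diff)
  show ?thesis
    unfolding FF_def[abs_def] using w m
    by (auto intro!: derivative_eq_intros simp: e field_simps power2_eq_square)
qed

lemma J_integral:
  assumes m: "m > 0" and z: "z > 0" and nn: "\<And>w. 0 < w \<Longrightarrow> w \<le> z \<Longrightarrow> - ln w + D \<ge> 0"
  shows "(\<integral>\<^sup>+ w. ennreal (indicator {0<..z} w * (w powr (m - 1) / (Gamma m)\<^sup>2) * (- ln w + D)) \<partial>lborel)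
         = ennreal (FF m D z / (Gamma m)\<^sup>2)"
proof -
  have "((\<lambda>w. w powr (m - 1) * (- ln w + D)) has_integral (FF m D z - FF m D 0)) {0..z}"
  proof (rule fundamental_theorem_of_calculus_interior)
    show "0 \<le> z" using z by simp
    show "continuous_on {0..z} (FF m D)" by (rule FF_cont[OF m z])
    show "(FF m D has_vector_derivative w powr (m - 1) * (- ln w + D)) (at w)" if "w \<in> {0<..<z}" for w
      using FF_deriv[OF m, of w D] that by (simp add: has_real_derivative_iff_has_vector_derivative)
  qed
  hence "((\<lambda>w. w powr (m - 1) * (- ln w + D) / (Gamma m)\<^sup>2) has_integral (FF m D z / (Gamma m)\<^sup>2)) {0..z}"
    using has_integral_divide[of _ _ "{0..z}" "(Gamma m)\<^sup>2"] by (simp add: FF_0)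
  hence "integral\<^sup>N lborel (\<lambda>w. indicator {0..z} w * (w powr (m - 1) * (- ln w + D) / (Gamma m)\<^sup>2)) = FF m D z / (Gamma m)\<^sup>2"
  proof (rule nn_integral_has_integral_lebesgue[rotated])
    fix w assume "w \<in> {0..z}"
    thus "0 \<le> w powr (m - 1) * (- ln w + D) / (Gamma m)\<^sup>2"
      using nn[of w] by (cases "w = 0") auto
  qed
  moreover have "(\<integral>\<^sup>+ w. ennreal (indicator {0<..z} w * (w powr (m - 1) / (Gamma m)\<^sup>2) * (- ln w + D)) \<partial>lborel)
     = integral\<^sup>N lborel (\<lambda>w. indicator {0..z} w * (w powr (m - 1) * (- ln w + D) / (Gamma m)\<^sup>2))"
  proof (rule nn_integral_cong)
    fix w :: real
    show "ennreal (indicator {0<..z} w * (w powr (m - 1) / (Gamma m)\<^sup>2) * (- ln w + D))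
       = ennreal (indicator {0..z} w * (w powr (m - 1) * (- ln w + D) / (Gamma m)\<^sup>2))"
      by (cases "w = 0") (auto simp: indicator_def)
  qed
  ultimately show ?thesis by simp
qed



definition Kr :: "real \<Rightarrow> real" where "Kr w = T1 w + Digamma 1 - R w - ln w"

lemma Kn_eq:
  assumes w: "0 < w" "w \<le> 1"
  shows "(\<integral>\<^sup>+ u. ennreal (indicator {0<..} u * (exp (- u - w / u) / u)) \<partial>lborel) = ennreal (Kr w)"
    and "Kr w \<ge> 0"
proof -
  have h: "((\<lambda>u. exp (- u - w / u) / u) has_integral Kr w) {0<..}"
    using K_has_int[OF w] by (simp add: Kr_def)
  show "(\<integral>\<^sup>+ u. ennreal (indicator {0<..} u * (exp (- u - w / u) / u)) \<partial>lborel) = ennreal (Kr w)"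
    by (rule nn_integral_has_integral_lebesgue[OF _ h]) simp
  show "Kr w \<ge> 0"
    by (rule has_integral_nonneg[OF h]) simp
qed

lemma FF_shift: "FF m (D + e) z = FF m D z + e * z powr m / m"
  unfolding FF_def by (simp add: algebra_simps add_divide_distrib diff_divide_distrib)

definition GG :: "real \<Rightarrow> real \<Rightarrow> real" where
  "GG m z = enn2real (\<integral>\<^sup>+ w. ennreal (indicator {0<..z} w * (w powr (m - 1) / (Gamma m)\<^sup>2))
            * (\<integral>\<^sup>+ u. ennreal (indicator {0<..} u * (exp (- u - w / u) / u)) \<partial>lborel) \<partial>lborel)"

lemma main_bound:
  assumes m: "m > 0" and e: "e > 0"
  obtains \<delta> where "\<delta> > 0" "\<delta> \<le> 1"
    "\<And>z. 0 < z \<Longrightarrow> z \<le> \<delta> \<Longrightarrow>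
       \<bar>GG m z - FF m (2 * Digamma 1) z / (Gamma m)\<^sup>2\<bar> \<le> e * z powr m / (m * (Gamma m)\<^sup>2)"
proof -
  define L where "L = 2 * Digamma (1::real)"
  have ev1: "eventually (\<lambda>w. dist (T1 w + Digamma 1 - R w) L < e) (at_right 0)"
    using tendstoD[OF K_lim e] unfolding L_def .
  have "filterlim (\<lambda>w. - ln w) at_top (at_right (0::real))"
    by (rule filterlim_compose[OF filterlim_uminus_at_top_at_bot ln_at_0])
  hence ev2: "eventually (\<lambda>w. - ln w \<ge> e - L) (at_right 0)"
    unfolding filterlim_at_top by blast
  from eventually_conj[OF ev1 ev2] obtain b where b: "b > 0"
    and P: "\<And>w. 0 < w \<Longrightarrow> w < b \<Longrightarrow> dist (T1 w + Digamma 1 - R w) L < e \<and> - ln w \<ge> e - L"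
    unfolding eventually_at_right_field by blast
  define \<delta> where "\<delta> = min (b / 2) 1"
  have d: "\<delta> > 0" "\<delta> \<le> 1" "\<delta> < b" using b by (auto simp: \<delta>_def)
  show ?thesis
  proof (rule that[OF d(1,2)])
    fix z assume z: "0 < z" "z \<le> \<delta>"
    define a where "a = (\<lambda>w::real. w powr (m - 1) / (Gamma m)\<^sup>2)"
    have a_nn: "a w \<ge> 0" for w unfolding a_def by simp
    define X where "X = (\<integral>\<^sup>+ w. ennreal (indicator {0<..z} w * a w)
            * (\<integral>\<^sup>+ u. ennreal (indicator {0<..} u * (exp (- u - w / u) / u)) \<partial>lborel) \<partial>lborel)"
    have Pw: "\<bar>Kr w + ln w - L\<bar> < e" "- ln w \<ge> e - L" "Kr w \<ge> 0"
      "(\<integral>\<^sup>+ u. ennreal (indicator {0<..} u * (exp (- u - w / u) / u)) \<partial>lborel) = ennreal (Kr w)"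
      if "0 < w" "w \<le> z" for w
    proof -
      have "w < b" "w \<le> 1" using that z d by auto
      thus "\<bar>Kr w + ln w - L\<bar> < e" "- ln w \<ge> e - L" using P[of w] that by (auto simp: Kr_def dist_real_def)
      show "Kr w \<ge> 0" "(\<integral>\<^sup>+ u. ennreal (indicator {0<..} u * (exp (- u - w / u) / u)) \<partial>lborel) = ennreal (Kr w)"
        using Kn_eq[of w] that \<open>w \<le> 1\<close> by auto
    qed
    have Xeq: "X = (\<integral>\<^sup>+ w. ennreal (indicator {0<..z} w * a w * Kr w) \<partial>lborel)"
      unfolding X_def
    proof (rule nn_integral_cong)
      fix w :: real
      show "ennreal (indicator {0<..z} w * a w) * (\<integral>\<^sup>+ u. ennreal (indicator {0<..} u * (exp (- u - w / u) / u)) \<partial>lborel)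
            = ennreal (indicator {0<..z} w * a w * Kr w)"
      proof (cases "w \<in> {0<..z}")
        case True thus ?thesis using Pw[of w] a_nn[of w] by (simp add: ennreal_mult)
      next
        case False thus ?thesis by simp
      qed
    qed
    have nnl: "- ln w + (L - e) \<ge> 0" "- ln w + (L + e) \<ge> 0" if "0 < w" "w \<le> z" for w
    proof -
      have "- ln w \<ge> e - L" using Pw(2)[OF that] .
      thus "- ln w + (L - e) \<ge> 0" "- ln w + (L + e) \<ge> 0" using e by linarith+
    qed
    have lo: "ennreal (FF m (L - e) z / (Gamma m)\<^sup>2) \<le> X"
    proof -
      have "ennreal (FF m (L - e) z / (Gamma m)\<^sup>2) = (\<integral>\<^sup>+ w. ennreal (indicator {0<..z} w * a w * (- ln w + (L - e))) \<partial>lborel)"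
        unfolding a_def by (rule J_integral[OF m z(1) nnl(1), symmetric])
      also have "\<dots> \<le> X" unfolding Xeq
      proof (intro nn_integral_mono ennreal_leI)
        fix w :: real
        show "indicator {0<..z} w * a w * (- ln w + (L - e)) \<le> indicator {0<..z} w * a w * Kr w"
        proof (cases "w \<in> {0<..z}")
          case True
          hence "- ln w + (L - e) \<le> Kr w" using Pw(1)[of w] by auto
          thus ?thesis using a_nn[of w] True by (simp add: mult_left_mono)
        qed simp
      qed
      finally show ?thesis .
    qed
    have hi: "X \<le> ennreal (FF m (L + e) z / (Gamma m)\<^sup>2)"
    proof -
      have "X \<le> (\<integral>\<^sup>+ w. ennreal (indicator {0<..z} w * a w * (- ln w + (L + e))) \<partial>lborel)" unfolding Xeq
      proof (intro nn_integral_mono ennreal_leI)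
        fix w :: real
        show "indicator {0<..z} w * a w * Kr w \<le> indicator {0<..z} w * a w * (- ln w + (L + e))"
        proof (cases "w \<in> {0<..z}")
          case True
          hence "Kr w \<le> - ln w + (L + e)" using Pw(1)[of w] by auto
          thus ?thesis using a_nn[of w] True by (simp add: mult_left_mono)
        qed simp
      qed
      also have "\<dots> = ennreal (FF m (L + e) z / (Gamma m)\<^sup>2)"
        unfolding a_def by (rule J_integral[OF m z(1) nnl(2)])
      finally show ?thesis .
    qed
    have FFnn: "FF m (L - e) z \<ge> 0"
    proof -
      have "0 \<le> z powr m * (- ln z + (L - e))" using nnl(1)[of z] z by simp
      hence "0 \<le> z powr m * (- ln z + (L - e)) / m" using m by simp
      moreover have "0 \<le> z powr m / m\<^sup>2" by simp
      ultimately show ?thesis unfolding FF_def by linarith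
    qed
    have FFnn2: "FF m (L + e) z \<ge> 0"
    proof -
      have "0 \<le> z powr m * (- ln z + (L + e))" using nnl(2)[of z] z by simp
      hence "0 \<le> z powr m * (- ln z + (L + e)) / m" using m by simp
      moreover have "0 \<le> z powr m / m\<^sup>2" by simp
      ultimately show ?thesis unfolding FF_def by linarith
    qed
    have Xfin: "X < top" using hi by (simp add: le_less_trans)
    have r1: "FF m (L - e) z / (Gamma m)\<^sup>2 \<le> enn2real X"
    proof -
      have "enn2real (ennreal (FF m (L - e) z / (Gamma m)\<^sup>2)) \<le> enn2real X"
        by (rule enn2real_mono[OF lo Xfin])
      thus ?thesis using FFnn by simp
    qed
    have r2: "enn2real X \<le> FF m (L + e) z / (Gamma m)\<^sup>2"
    proof -
      have "enn2real X \<le> enn2real (ennreal (FF m (L + e) z / (Gamma m)\<^sup>2))"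
        by (rule enn2real_mono[OF hi]) simp
      thus ?thesis using FFnn2 by simp
    qed
    have s1: "FF m (L + e) z = FF m L z + e * z powr m / m" by (rule FF_shift)
    have s2: "FF m (L - e) z = FF m L z - e * z powr m / m" using FF_shift[of m L "-e" z] by simp
    have "\<bar>enn2real X - FF m L z / (Gamma m)\<^sup>2\<bar> \<le> e * z powr m / (m * (Gamma m)\<^sup>2)"
    proof -
      define t where "t = e * z powr m / m"
      define G2 where "G2 = (Gamma m)\<^sup>2"
      have q1: "(FF m L z - t) / G2 = FF m L z / G2 - t / G2" by (simp add: diff_divide_distrib)
      have q2: "(FF m L z + t) / G2 = FF m L z / G2 + t / G2" by (simp add: add_divide_distrib)
      have q3: "t / G2 = e * z powr m / (m * G2)" by (simp add: t_def)
      show ?thesis using r1 r2 unfolding s1 s2 t_def[symmetric] G2_def[symmetric] q1 q2 q3[symmetric] by (simp add: abs_le_iff)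
    qed
    thus "\<bar>GG m z - FF m (2 * Digamma 1) z / (Gamma m)\<^sup>2\<bar> \<le> e * z powr m / (m * (Gamma m)\<^sup>2)"
      unfolding X_def a_def L_def GG_def .
  qed
qed



lemma aux2:
  fixes P X Gm G m a b l :: real
  assumes "P > 0" "X > 0" "Gm > 0" "G > 0" "m > 0"
  shows "(a + 1 / m + b - a - l) / (m / P * G * (1 / X) * Gm) = (P * X / Gm * (- l + b) / m + P * X / Gm / m\<^sup>2) / G"
  using assms by (simp add: field_simps power2_eq_square)

lemma main_eq:
  fixes m x g :: real
  assumes m: "m > 0" and x: "x > 0" and g: "g > 0"
  shows "(Digamma (m + 1) + 2 * Digamma 1 - Digamma m - ln (m\<^sup>2 * x / g))
             / (m powr (- 2 * m + 1) * (Gamma m)\<^sup>2 * x powr (- m) * g powr m)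
       = FF m (2 * Digamma 1) (m\<^sup>2 * x / g) / (Gamma m)\<^sup>2"
    and "(m\<^sup>2 * x / g) powr m = m powr (2 * m) * x powr m / g powr m"
proof -
  define P where "P = m powr (2 * m)"
  define X where "X = x powr m"
  define Gm where "Gm = g powr m"
  define z where "z = m\<^sup>2 * x / g"
  have pos: "P > 0" "X > 0" "Gm > 0" "Gamma m > 0" using m x g by (auto simp: P_def X_def Gm_def Gamma_real_pos)
  have "m powr (- 2 * m + 1) = m powr (1 - 2 * m)" by (simp add: algebra_simps)
  also have "\<dots> = m powr 1 / m powr (2 * m)" by (rule powr_diff)
  finally have e1: "m powr (- 2 * m + 1) = m / P" using m by (simp add: P_def)
  have e2: "x powr (- m) = 1 / X" using x by (simp add: X_def powr_minus divide_inverse)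
  have "(m\<^sup>2) powr m = P"
  proof -
    have "m\<^sup>2 = m powr 2" using m by (simp add: powr_numeral)
    hence "(m\<^sup>2) powr m = m powr (2 * m)" by (simp add: powr_powr)
    thus ?thesis by (simp add: P_def)
  qed
  hence e3: "z powr m = P * X / Gm"
    using m x g by (simp add: z_def X_def Gm_def powr_divide powr_mult)
  thus "(m\<^sup>2 * x / g) powr m = m powr (2 * m) * x powr m / g powr m"
    by (simp add: z_def P_def X_def Gm_def)
  have e4: "Digamma (m + 1) = Digamma m + 1 / m" using Digamma_plus1[of m] m by simp
  show "(Digamma (m + 1) + 2 * Digamma 1 - Digamma m - ln (m\<^sup>2 * x / g))
             / (m powr (- 2 * m + 1) * (Gamma m)\<^sup>2 * x powr (- m) * g powr m)
       = FF m (2 * Digamma 1) (m\<^sup>2 * x / g) / (Gamma m)\<^sup>2"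
    unfolding z_def[symmetric] FF_def e1 e2 e3 e4 Gm_def[symmetric]
    by (rule aux2[OF pos(1,2,3) zero_less_power[OF pos(4)] m])
qed

lemma aux_frac:
  fixes P X Gm Q c :: real
  assumes "P > 0" "X > 0" "Gm > 0" "Q > 0"
  shows "c / (P * X / Q) * (P * X / Gm) / Q = c / Gm"
  using assms by (simp add: field_simps)

theorem proposition4p1:
  fixes m x :: real
  assumes "m > 0" and "x > 0"
  shows "(\<lambda>g. genK_cdf m m g x
           - (Digamma (m + 1) + 2 * Digamma 1 - Digamma m - ln (m\<^sup>2 * x / g))
             / (m powr (- 2 * m + 1) * (Gamma m)\<^sup>2 * x powr (- m) * g powr m))
         \<in> o[at_top](\<lambda>g. g powr (- m))"
proof (rule landau_o.smallI)
  fix c :: real assume c: "c > 0"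
  have m: "m > 0" and x: "x > 0" using assms by auto
  define K0 where "K0 = m powr (2 * m) * x powr m / (m * (Gamma m)\<^sup>2)"
  have Gp: "Gamma m > 0" using m by (rule Gamma_real_pos)
  have G2: "(Gamma m)\<^sup>2 > 0" by (rule zero_less_power[OF Gp])
  have A: "m powr (2*m) * x powr m > 0" using m x by simp
  have Bp: "m * (Gamma m)\<^sup>2 > 0" using m G2 by (rule mult_pos_pos)
  have K0: "K0 > 0" unfolding K0_def by (rule divide_pos_pos[OF A Bp])
  define e where "e = c / K0"
  have e: "e > 0" using c K0 by (simp add: e_def)
  show "eventually (\<lambda>g. norm (genK_cdf m m g x
           - (Digamma (m + 1) + 2 * Digamma 1 - Digamma m - ln (m\<^sup>2 * x / g))
             / (m powr (- 2 * m + 1) * (Gamma m)\<^sup>2 * x powr (- m) * g powr m))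
         \<le> c * norm (g powr (- m))) at_top"
  proof (rule main_bound[OF m e])
    fix \<delta> assume d: "\<delta> > 0" "\<delta> \<le> 1" and B: "\<And>z. 0 < z \<Longrightarrow> z \<le> \<delta> \<Longrightarrow>
       \<bar>GG m z - FF m (2 * Digamma 1) z / (Gamma m)\<^sup>2\<bar> \<le> e * z powr m / (m * (Gamma m)\<^sup>2)"
    show ?thesis
    using eventually_ge_at_top[of "m\<^sup>2 * x / \<delta> + 1"]
  proof eventually_elim
    case (elim g)
    have "m\<^sup>2 * x / \<delta> \<ge> 0" using m x d by simp
    hence g: "g > 0" using elim by linarith
    define z where "z = m\<^sup>2 * x / g"
    have z: "0 < z" "z \<le> \<delta>"
    proof -
      show "0 < z" using m x g by (simp add: z_def)
      have "m\<^sup>2 * x / \<delta> \<le> g" using elim by simp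
      hence "m\<^sup>2 * x \<le> g * \<delta>" using d by (simp add: divide_le_eq mult.commute)
      thus "z \<le> \<delta>" using g by (simp add: z_def divide_le_eq mult.commute)
    qed
    have eqs: "(Digamma (m + 1) + 2 * Digamma 1 - Digamma m - ln (m\<^sup>2 * x / g))
             / (m powr (- 2 * m + 1) * (Gamma m)\<^sup>2 * x powr (- m) * g powr m)
       = FF m (2 * Digamma 1) z / (Gamma m)\<^sup>2"
      "z powr m = m powr (2 * m) * x powr m / g powr m"
      unfolding z_def by (rule main_eq(1)[OF m x g], rule main_eq(2)[OF m x g])
    have "e * z powr m / (m * (Gamma m)\<^sup>2) = c / g powr m"
      unfolding eqs(2) e_def K0_def mult.assoc[symmetric]
      by (rule aux_frac) (use m x g Bp in auto)
    also have "\<dots> = c * g powr (- m)" by (simp add: powr_minus divide_inverse)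
    finally have ez: "e * z powr m / (m * (Gamma m)\<^sup>2) = c * g powr (- m)" .
    have nrm: "norm (g powr (- m)) = g powr (- m)" by simp
    show ?case
    proof -
      have "genK_cdf m m g x = GG m z" unfolding GG_def z_def by (rule genK_repr[OF m g x])
      thus ?thesis using B[OF z] unfolding eqs(1) nrm ez[symmetric] by simp
    qed
  qed
  qed
qed


end
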